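(* Let $\zeta\in(0,1]$, $\beta\ge0$, $\lambda\ge0$, $p\in(0,1]$, and integers $\tau_n\ge1$, $D_n\ge1$. Define $V(1,\tau)=\beta$ for $0\le\tau<\tau_n$ and $V(1,\tau)=p\beta$ for $\tau_n\le\tau<\tau_n+D_n$, and define $V(0,\tau)$ for $0\le\tau\le\tau_n+D_n$ by $V(0,0)=0$, $$V(0,\tau)=\max\big\{V(0,\tau-1),\,-\lambda+\zeta V(1,\tau-1)+(1-\zeta)V(0,\tau-1)\big\}\quad (1\le\tau\le\tau_n+D_n,\ \tau\ne\tau_n+1),$$ $$V(0,\tau_n+1)=\max\big\{pV(0,\tau_n),\,-\lambda+\zeta V(1,\tau_n)+(1-\zeta)pV(0,\tau_n)\big\}.$$ (A) Suppose $\zeta\beta>\lambda$ and set $c=\dfrac{\lambda}{(\zeta\beta-\lambda)(1-\zeta)^{\tau_n}+\lambda}$. (i) If $p>c$, then for all $1\le w\le D_n$, $$V(0,\tau_n+w)=-(1-p)\frac{1-(1-\zeta)^{w}}{\zeta}\lambda+p\,\frac{1-(1-\zeta)^{\tau_n+w}}{\zeta}(\zeta\beta-\lambda),$$ and for each such $w$ the maximum defining $V(0,\tau_n+w)$ is attained by the second ("transmit") option. (ii) If $p\le c$, then for all $1\le w\le D_n$, $V(0,\tau_n+w)=p\,\frac{1-(1-\zeta)^{\tau_n}}{\zeta}(\zeta\beta-\lambda)$; if moreover $p<c$, then for each such $w$ the second option is strictly smaller than the first ("do not transmit") option. (B) If $\zeta\beta\le\lambda$, then $V(0,\tau_n+w)=0$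 for all $1\le w\le D_n$, and if $\zeta\beta<\lambda$ the second option is strictly smaller than the first at every $\tau\in\{1,\dots,\tau_n+D_n\}$.
   Context: This is the single-packet dynamic program for a predicted arrival of a user under imperfect prediction, with static channel (success probability $\zeta$ per transmission) and binary resource levels $\{0,1\}$. A predicted packet enters the prediction window $D_n$ slots before its actual arrival and has deadline $\tau_n$ after arrival; $\tau$ is the number of slots remaining until the deadline (so $\tau>\tau_n$ means the packet is still only predicted). Each prediction is correct with probability $p$ (true-positive rate), which is revealed when the packet's arrival time comes; $\beta$ is the delivery reward and $\lambda$ the cost per transmission. In each max, the first option is not transmitting and the second is transmitting. *)

theory Defs
  imports Complex_Main
begin

definition V1 :: "real \<Rightarrow> real \<Rightarrow> nat \<Rightarrow> nat \<Rightarrow> real" where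
  "V1 p beta tn t = (if t < tn then beta else p * beta)"

fun V0 :: "real \<Rightarrow> real \<Rightarrow> real \<Rightarrow> real \<Rightarrow> nat \<Rightarrow> nat \<Rightarrow> real" where
  "V0 zeta beta lambda p tn 0 = 0"
| "V0 zeta beta lambda p tn (Suc t) =
     (if Suc t = tn + 1
      then max (p * V0 zeta beta lambda p tn t)
               (- lambda + zeta * V1 p beta tn t + (1 - zeta) * p * V0 zeta beta lambda p tn t)
      else max (V0 zeta beta lambda p tn t)
               (- lambda + zeta * V1 p beta tn t + (1 - zeta) * V0 zeta beta lambda p tn t))"

definition opt_wait :: "real \<Rightarrow> real \<Rightarrow> real \<Rightarrow> real \<Rightarrow> nat \<Rightarrow> nat \<Rightarrow> real" where
  "opt_wait zeta beta lambda p tn tau =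
     (if tau = tn + 1 then p * V0 zeta beta lambda p tn (tau - 1)
      else V0 zeta beta lambda p tn (tau - 1))"

definition opt_tx :: "real \<Rightarrow> real \<Rightarrow> real \<Rightarrow> real \<Rightarrow> nat \<Rightarrow> nat \<Rightarrow> real" where
  "opt_tx zeta beta lambda p tn tau =
     (if tau = tn + 1
      then - lambda + zeta * V1 p beta tn (tau - 1) + (1 - zeta) * p * V0 zeta beta lambda p tn (tau - 1)
      else - lambda + zeta * V1 p beta tn (tau - 1) + (1 - zeta) * V0 zeta beta lambda p tn (tau - 1))"

end

theory Submission
  imports Defs
begin

lemma V_step: "t \<noteq> tn \<Longrightarrow> V0 z b l p tn (Suc t) = max (V0 z b l p tn t) (- l + z * V1 p b tn t + (1 - z) * V0 z b l p tn t)"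
  by simp

lemma V_step_tn: "V0 z b l p tn (Suc tn) = max (p * V0 z b l p tn tn) (- l + z * (p*b) + (1 - z) * (p * V0 z b l p tn tn))"
  by (simp add: V1_def)

lemma W_suc: "t \<noteq> tn \<Longrightarrow> opt_wait z b l p tn (Suc t) = V0 z b l p tn t"
  "opt_wait z b l p tn (Suc tn) = p * V0 z b l p tn tn"
  by (auto simp: opt_wait_def)

lemma T_suc: "t \<noteq> tn \<Longrightarrow> opt_tx z b l p tn (Suc t) = - l + z * V1 p b tn t + (1 - z) * V0 z b l p tn t"
  "opt_tx z b l p tn (Suc tn) = - l + z * (p*b) + (1 - z) * (p * V0 z b l p tn tn)"
  by (auto simp: opt_tx_def V1_def)

lemma phase1:
  assumes z: "0 < z" "z \<le> 1" and a: "0 \<le> z*b - l"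
  shows "t \<le> tn \<Longrightarrow> z * V0 z b l p tn t = (z*b - l) * (1 - (1-z)^t)"
proof (induction t)
  case 0 then show ?case by simp
next
  case (Suc t)
  have ne: "t \<noteq> tn" using Suc by simp
  have v1: "V1 p b tn t = b" using Suc by (simp add: V1_def)
  have IH: "z * V0 z b l p tn t = (z*b - l) * (1 - (1-z)^t)" using Suc by simp
  have q: "(1-z)^(Suc t) \<le> (1-z)^t" by (rule power_decreasing) (use z in auto)
  have "z * V0 z b l p tn t \<le> z*b - l"
    using IH a z by (simp add: mult_left_le)
  hence le: "V0 z b l p tn t \<le> - l + z * b + (1 - z) * V0 z b l p tn t"
    by (simp add: algebra_simps)
  have e: "V0 z b l p tn (Suc t) = - l + z * b + (1 - z) * V0 z b l p tn t"
    using V_step[OF ne, of z b l p] v1 le by (simp del: V0.simps)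
  have "z * V0 z b l p tn (Suc t) = z*(- l + z * b) + (1 - z) * (z * V0 z b l p tn t)"
    unfolding e by (simp add: algebra_simps)
  also have "\<dots> = (z*b - l) * (1 - (1-z)^(Suc t))" unfolding IH by (simp add: algebra_simps)
  finally show ?case .
qed

lemma zero_case:
  assumes z: "0 < z" "z \<le> 1" and a: "z*b \<le> l" and p: "0 < p" "p \<le> 1" and b: "0 \<le> b"
  shows "V0 z b l p tn t = 0"
proof (induction t)
  case 0 then show ?case by simp
next
  case (Suc t)
  have "z * V1 p b tn t \<le> z * b" using z p b by (auto simp: V1_def mult_left_le mult_left_le_one_le)
  then show ?case using Suc a by (cases "t = tn") auto
qed

theorem theorem3:
  fixes zeta beta lambda p :: real and tn Dn :: nat
  assumes "0 < zeta" "zeta \<le> 1" "0 \<le> beta" "0 \<le> lambda" "0 < p" "p \<le> 1"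
    and "1 \<le> tn" "1 \<le> Dn"
  defines "V \<equiv> V0 zeta beta lambda p tn"
    and "W \<equiv> opt_wait zeta beta lambda p tn"
    and "T \<equiv> opt_tx zeta beta lambda p tn"
    and "c \<equiv> lambda / ((zeta * beta - lambda) * (1 - zeta) ^ tn + lambda)"
  shows
    "(zeta * beta > lambda \<longrightarrow>
       (p > c \<longrightarrow>
          (\<forall>w. 1 \<le> w \<and> w \<le> Dn \<longrightarrow>
             V (tn + w) = - (1 - p) * ((1 - (1 - zeta) ^ w) / zeta) * lambda
                          + p * ((1 - (1 - zeta) ^ (tn + w)) / zeta) * (zeta * beta - lambda)
             \<and> V (tn + w) = T (tn + w))) \<and>
       (p \<le> c \<longrightarrow>
          (\<forall>w. 1 \<le> w \<and> w \<le> Dn \<longrightarrow>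
             V (tn + w) = p * ((1 - (1 - zeta) ^ tn) / zeta) * (zeta * beta - lambda)) \<and>
          (p < c \<longrightarrow> (\<forall>w. 1 \<le> w \<and> w \<le> Dn \<longrightarrow> T (tn + w) < W (tn + w))))) \<and>
     (zeta * beta \<le> lambda \<longrightarrow>
       (\<forall>w. 1 \<le> w \<and> w \<le> Dn \<longrightarrow> V (tn + w) = 0) \<and>
       (zeta * beta < lambda \<longrightarrow>
          (\<forall>tau. 1 \<le> tau \<and> tau \<le> tn + Dn \<longrightarrow> T tau < W tau)))"
proof (intro conjI impI)
  let ?z = zeta and ?b = beta and ?l = lambda
  define q where "q = 1 - zeta"
  define a where "a = zeta * beta - lambda"
  define F where "F = - lambda + zeta * (p * beta)"
  define D where "D = a * q ^ tn + lambda"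
  have q0: "0 \<le> q" "q \<le> 1" using assms by (auto simp: q_def)
  have V1big: "\<And>t. tn \<le> t \<Longrightarrow> V1 p beta tn t = p * beta" by (simp add: V1_def)
  have Vs: "\<And>t. tn < t \<Longrightarrow> V (Suc t) = max (V t) (F + q * V t)"
    unfolding V_def F_def q_def using V_step V1big by (simp add: less_imp_le)
  have Ts: "\<And>t. tn < t \<Longrightarrow> T (Suc t) = F + q * V t"
    unfolding T_def V_def F_def q_def using T_suc V1big by (simp add: less_imp_le)
  have Ws: "\<And>t. tn < t \<Longrightarrow> W (Suc t) = V t"
    unfolding W_def V_def using W_suc by simp
  have V1s: "V (Suc tn) = max (p * V tn) (F + q * (p * V tn))"
    unfolding V_def F_def q_def using V_step_tn by simp
  have T1s: "T (Suc tn) = F + q * (p * V tn)"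
    unfolding T_def V_def F_def q_def using T_suc by simp
  have W1s: "W (Suc tn) = p * V tn"
    unfolding W_def V_def using W_suc by simp
  {
    assume A: "zeta * beta > lambda"
    have a0: "0 < a" using A by (simp add: a_def)
    have Vtn: "zeta * V tn = a * (1 - q^tn)"
      unfolding V_def a_def q_def using phase1[of zeta beta lambda tn tn p] A assms by simp
    have pV: "zeta * (p * V tn) = p * (a * (1 - q^tn))" using Vtn by (metis mult.left_commute)
    have FY: "F - zeta * (p * V tn) = p * D - lambda"
      unfolding pV unfolding F_def D_def a_def q_def by (simp add: algebra_simps)
    have D0: "0 \<le> D" unfolding D_def using a0 q0 assms by simp
    have cD: "c = lambda / D" unfolding c_def D_def a_def q_def by simp
    {
      assume pc: "p > c"
      have pD: "lambda \<le> p * D"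
      proof (cases "D = 0")
        case True
        then have "lambda = 0" using a0 q0 assms unfolding D_def
          by (smt (verit) mult_nonneg_nonneg zero_le_power)
        then show ?thesis using True by simp
      next
        case False
        then have "D > 0" using D0 by simp
        then show ?thesis using pc cD by (simp add: pos_divide_less_eq less_imp_le mult.commute)
      qed
      have inv: "\<And>w. 1 \<le> w \<Longrightarrow> zeta * V (tn + w) = F - q^w * (F - zeta * (p * V tn)) \<and> V (tn + w) = T (tn + w)"
      proof -
        fix w :: nat assume "1 \<le> w"
        then show "zeta * V (tn + w) = F - q^w * (F - zeta * (p * V tn)) \<and> V (tn + w) = T (tn + w)"
        proof (induction w rule: dec_induct)
          case base
          have "zeta * (p * V tn) \<le> F" using FY pD by simp
          hence "p * V tn \<le> F + q * (p * V tn)" unfolding q_def by (simp add: algebra_simps)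
          hence e: "V (Suc tn) = F + q * (p * V tn)" using V1s by simp
          have "zeta * V (tn + 1) = zeta*F + q*(zeta*(p*V tn))" using e by (simp add: algebra_simps)
          also have "\<dots> = F - q^1 * (F - zeta * (p * V tn))" unfolding q_def by (simp add: algebra_simps)
          finally show ?case using e T1s by simp
        next
          case (step w)
          have lt: "tn < tn + w" using step by simp
          have "0 \<le> q^w * (F - zeta * (p * V tn))" using FY pD q0 by simp
          hence "zeta * V (tn + w) \<le> F" using step(3) by linarith
          hence le: "V (tn+w) \<le> F + q * V (tn+w)" unfolding q_def by (simp add: algebra_simps)
          have e: "V (Suc (tn + w)) = F + q * V (tn+w)" using Vs[OF lt] le by simp
          have "zeta * V (tn + Suc w) = zeta * F + q * (zeta * V (tn+w))" using e by (simp add: algebra_simps)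
          also have "\<dots> = F - q^Suc w * (F - zeta * (p * V tn))"
            unfolding conjunct1[OF step(3)] q_def by (simp add: algebra_simps)
          finally show ?case using e Ts[OF lt] by simp
        qed
      qed
      show "\<forall>w. 1 \<le> w \<and> w \<le> Dn \<longrightarrow>
             V (tn + w) = - (1 - p) * ((1 - (1 - zeta) ^ w) / zeta) * lambda
                          + p * ((1 - (1 - zeta) ^ (tn + w)) / zeta) * (zeta * beta - lambda)
             \<and> V (tn + w) = T (tn + w)"
      proof (intro allI impI conjI)
        fix w assume w: "1 \<le> w \<and> w \<le> Dn"
        have z: "zeta * V (tn + w) = F - q^w * (F - zeta * (p * V tn))" using inv w by blast
        have "zeta * V (tn + w) = zeta * (- (1 - p) * ((1 - (1 - zeta) ^ w) / zeta) * lambda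
                          + p * ((1 - (1 - zeta) ^ (tn + w)) / zeta) * (zeta * beta - lambda))"
        proof -
          have r: "zeta * (- (1 - p) * ((1 - (1 - zeta) ^ w) / zeta) * lambda
                          + p * ((1 - (1 - zeta) ^ (tn + w)) / zeta) * (zeta * beta - lambda))
               = - (1 - p) * (1 - q ^ w) * lambda + p * (1 - q^tn * q^w) * a"
            using assms(1) unfolding q_def a_def by (simp add: field_simps power_add)
          have "zeta * (p * V tn) = p * (a * (1 - q^tn))" using pV .
          show ?thesis unfolding r z pV unfolding F_def a_def by (simp add: algebra_simps)
        qed
        then show "V (tn + w) = - (1 - p) * ((1 - (1 - zeta) ^ w) / zeta) * lambda
                          + p * ((1 - (1 - zeta) ^ (tn + w)) / zeta) * (zeta * beta - lambda)"
          using assms(1) by simp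
        show "V (tn + w) = T (tn + w)" using inv w by blast
      qed
    }
    {
      assume pc: "p \<le> c"
      have Dp: "D > 0"
      proof (rule ccontr)
        assume "\<not> D > 0" then have "D = 0" using D0 by simp
        then have "c = 0" using cD by simp
        then show False using pc \<open>0 < p\<close> by linarith
      qed
      have pD: "p * D \<le> lambda" using pc cD Dp by (simp add: le_divide_eq mult.commute)
      have inv: "\<And>w. 1 \<le> w \<Longrightarrow> V (tn + w) = p * V tn \<and> W (tn + w) = p * V tn \<and> T (tn + w) = F + q * (p * V tn)"
      proof -
        fix w :: nat assume "1 \<le> w"
        then show "V (tn + w) = p * V tn \<and> W (tn + w) = p * V tn \<and> T (tn + w) = F + q * (p * V tn)"
        proof (induction w rule: dec_induct)
          case base
          have "zeta * (p * V tn) \<ge> F" using FY pD by simp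
          hence "p * V tn \<ge> F + q * (p * V tn)" unfolding q_def by (simp add: algebra_simps)
          thus ?case using V1s T1s W1s by simp
        next
          case (step w)
          have lt: "tn < tn + w" using step by simp
          have "zeta * (p * V tn) \<ge> F" using FY pD by simp
          hence "p * V tn \<ge> F + q * (p * V tn)" unfolding q_def by (simp add: algebra_simps)
          thus ?case using Vs[OF lt] Ts[OF lt] Ws[OF lt] step by simp
        qed
      qed
      show "\<forall>w. 1 \<le> w \<and> w \<le> Dn \<longrightarrow>
             V (tn + w) = p * ((1 - (1 - zeta) ^ tn) / zeta) * (zeta * beta - lambda)"
      proof (intro allI impI)
        fix w assume w: "1 \<le> w \<and> w \<le> Dn"
        have "V (tn + w) = p * V tn" using inv w by blast
        also have "V tn = a * (1 - q^tn) / zeta" using Vtn assms(1) by (simp add: field_simps)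
        finally show "V (tn + w) = p * ((1 - (1 - zeta) ^ tn) / zeta) * (zeta * beta - lambda)"
          unfolding a_def q_def by simp
      qed
      {
        assume pc': "p < c"
        have pD': "p * D < lambda" using pc' cD Dp by (simp add: less_divide_eq mult.commute)
        have "zeta * (p * V tn) > F" using FY pD' by simp
        hence gt: "p * V tn > F + q * (p * V tn)" unfolding q_def by (simp add: algebra_simps)
        show "\<forall>w. 1 \<le> w \<and> w \<le> Dn \<longrightarrow> T (tn + w) < W (tn + w)"
          using inv gt by simp
      }
    }
  }
  {
    assume B: "zeta * beta \<le> lambda"
    have V0z: "\<And>t. V t = 0" unfolding V_def using zero_case B assms by simp
    show "\<forall>w. 1 \<le> w \<and> w \<le> Dn \<longrightarrow> V (tn + w) = 0" using V0z by simp
    {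
      assume B': "zeta * beta < lambda"
      show "\<forall>tau. 1 \<le> tau \<and> tau \<le> tn + Dn \<longrightarrow> T tau < W tau"
      proof (intro allI impI)
        fix tau assume "1 \<le> tau \<and> tau \<le> tn + Dn"
        then obtain t where t: "tau = Suc t" by (cases tau) auto
        have v1: "zeta * V1 p beta tn t \<le> zeta * beta" using assms by (auto simp: V1_def mult_left_le mult_left_le_one_le)
        have "T tau = - lambda + zeta * V1 p beta tn t" "W tau = 0"
          using V0z unfolding t T_def W_def opt_tx_def opt_wait_def V_def by auto
        then show "T tau < W tau" using v1 B' by simp
      qed
    }
  }
qed

end
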